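(* For every graph $G=(V,E)$ with $V=\{1,\dots,n\}$ we have $\vartheta_2(G)=\vartheta_2'(G)$, where $$\vartheta_2'(G)=\max\Big\{\sum_{i=1}^n c(v_i,v_0)\Big\}$$ with the maximum taken over all integers $d\geq1$ and all families $(v_0,v_1,\dots,v_n)$ of vectors in $\mathbb R^d$ such that $\langle v_0,v_i\rangle\geq0$ for all $i$ and $\langle v_i,v_j\rangle\leq0$ whenever $\{i,j\}\in E$.
   Context: For $x,y\in\mathbb R^d$, $c(x,y)=\langle x,y\rangle^2\|x\|^{-2}\|y\|^{-2}$ if $x,y\neq0$ and $c(x,y)=0$ otherwise. For a graph $H$ on $\{1,\dots,n\}$ and real $k>1$, a rigid vector $k$-coloring of $H$ is an $n$-tuple of unit vectors $(u_1,\dots,u_n)$ in $\mathbb R^n$ with $\langle u_i,u_j\rangle=-1/(k-1)$ for all edges $\{i,j\}$ of $H$ and $\langle u_i,u_j\rangle\geq-1/(k-1)$ for all non-adjacent $i\neq j$; $\bar\vartheta_2(H)$ is the infimum of $k>1$ such that $H$ admits a rigid vector $k$-coloring, and $\vartheta_2(G)=\bar\vartheta_2(\bar G)$ where $\bar G$ is the complement of $G$. *)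

theory Defs
  imports Complex_Main
begin

text \<open>Vectors of \<real>^d are represented as functions nat \<Rightarrow> real, of which only the
  coordinates 0..d-1 are used.\<close>

definition ip :: "nat \<Rightarrow> (nat \<Rightarrow> real) \<Rightarrow> (nat \<Rightarrow> real) \<Rightarrow> real" where
  "ip d x y = (\<Sum>k<d. x k * y k)"

definition cfun :: "nat \<Rightarrow> (nat \<Rightarrow> real) \<Rightarrow> (nat \<Rightarrow> real) \<Rightarrow> real" where
  "cfun d x y = (if ip d x x \<noteq> 0 \<and> ip d y y \<noteq> 0
                 then (ip d x y)\<^sup>2 / (ip d x x * ip d y y) else 0)"

definition graph_on :: "nat \<Rightarrow> nat set set \<Rightarrow> bool" where
  "graph_on n E \<longleftrightarrow> E \<subseteq> {{i, j} | i j. i \<noteq> j \<and> i \<in> {1..n} \<and> j \<in> {1..n}}"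

definition complement :: "nat \<Rightarrow> nat set set \<Rightarrow> nat set set" where
  "complement n E = {{i, j} | i j. i \<noteq> j \<and> i \<in> {1..n} \<and> j \<in> {1..n} \<and> {i, j} \<notin> E}"

definition rigid_vector_coloring ::
  "nat \<Rightarrow> nat set set \<Rightarrow> real \<Rightarrow> (nat \<Rightarrow> nat \<Rightarrow> real) \<Rightarrow> bool" where
  "rigid_vector_coloring n H k u \<longleftrightarrow>
     (\<forall>i\<in>{1..n}. ip n (u i) (u i) = 1) \<and>
     (\<forall>i\<in>{1..n}. \<forall>j\<in>{1..n}. {i, j} \<in> H \<longrightarrow> ip n (u i) (u j) = - 1 / (k - 1)) \<and>
     (\<forall>i\<in>{1..n}. \<forall>j\<in>{1..n}. i \<noteq> j \<and> {i, j} \<notin> H \<longrightarrow> ip n (u i) (u j) \<ge> - 1 / (k - 1))"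

definition theta2_bar :: "nat \<Rightarrow> nat set set \<Rightarrow> real" where
  "theta2_bar n H = Inf {k. k > 1 \<and> (\<exists>u. rigid_vector_coloring n H k u)}"

definition theta2 :: "nat \<Rightarrow> nat set set \<Rightarrow> real" where
  "theta2 n G = theta2_bar n (complement n G)"

definition theta2'_values :: "nat \<Rightarrow> nat set set \<Rightarrow> real set" where
  "theta2'_values n E = {(\<Sum>i=1..n. cfun d (v i) (v 0)) | d v.
       d \<ge> 1 \<and>
       (\<forall>i\<in>{1..n}. ip d (v 0) (v i) \<ge> 0) \<and>
       (\<forall>i\<in>{1..n}. \<forall>j\<in>{1..n}. {i, j} \<in> E \<longrightarrow> ip d (v i) (v j) \<le> 0)}"

definition theta2' :: "nat \<Rightarrow> nat set set \<Rightarrow> real" where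
  "theta2' n E = Sup (theta2'_values n E)"

end

theory Submission
  imports Defs "HOL-Analysis.Analysis"
begin

lemma ip_nonneg: "0 \<le> ip d x x"
  unfolding ip_def by (auto intro: sum_nonneg)

lemma ip_sym: "ip d x y = ip d y x"
  unfolding ip_def by (simp add: mult.commute)

lemma ip_CS: "(ip d x y)\<^sup>2 \<le> ip d x x * ip d y y"
  using Cauchy_Schwarz_ineq_sum[of x y "{..<d}"]
  unfolding ip_def by (simp add: power2_eq_square)

lemma ip_zero: "ip d x x = 0 \<Longrightarrow> ip d x y = 0"
  using ip_CS[of d x y] by simp

lemma ip_Suc: "ip (Suc m) x y = ip m x y + x m * y m"
  unfolding ip_def by simp

lemma ip_upd: "ip m (x(m := c)) y = ip m x y" "ip m x (y(m := c)) = ip m x y"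
  unfolding ip_def by (auto intro!: sum.cong)

lemma ip_zero_vec: "ip d (\<lambda>_. 0) y = 0" "ip d y (\<lambda>_. 0) = 0"
  unfolding ip_def by auto

definition psd :: "nat set \<Rightarrow> (nat \<Rightarrow> nat \<Rightarrow> real) \<Rightarrow> bool" where
  "psd I M \<longleftrightarrow> (\<forall>i\<in>I. \<forall>j\<in>I. M i j = M j i) \<and>
     (\<forall>x. 0 \<le> (\<Sum>i\<in>I. \<Sum>j\<in>I. x i * M i j * x j))"

definition qf :: "nat set \<Rightarrow> (nat \<Rightarrow> nat \<Rightarrow> real) \<Rightarrow> (nat \<Rightarrow> real) \<Rightarrow> real" where
  "qf I M x = (\<Sum>i\<in>I. \<Sum>j\<in>I. x i * M i j * x j)"

lemma qf_insert:
  assumes "finite F" "a \<notin> F" "\<forall>i\<in>insert a F. \<forall>j\<in>insert a F. M i j = M j i"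
  shows "qf (insert a F) M x = (x a)\<^sup>2 * M a a + 2 * x a * (\<Sum>j\<in>F. M a j * x j) + qf F M x"
proof -
  have "qf (insert a F) M x = (x a * M a a * x a + (\<Sum>j\<in>F. x a * M a j * x j))
       + (\<Sum>i\<in>F. x i * M i a * x a + (\<Sum>j\<in>F. x i * M i j * x j))"
      unfolding qf_def by (simp only: sum.insert[OF assms(1,2)])
  also have "(\<Sum>i\<in>F. x i * M i a * x a + (\<Sum>j\<in>F. x i * M i j * x j)) = (\<Sum>i\<in>F. x i * M i a * x a) + qf F M x"
    unfolding qf_def by (rule sum.distrib)
  finally have 1: "qf (insert a F) M x = (x a * M a a * x a + (\<Sum>j\<in>F. x a * M a j * x j))
       + ((\<Sum>i\<in>F. x i * M i a * x a) + qf F M x)" .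
  have "(\<Sum>i\<in>F. x i * M i a * x a) = (\<Sum>j\<in>F. x a * (M a j * x j))"
  proof (rule sum.cong[OF refl])
    fix i assume "i \<in> F"
    then have "M i a = M a i" using assms(3) by blast
    then show "x i * M i a * x a = x a * (M a i * x i)" by simp
  qed
  then have 2: "(\<Sum>i\<in>F. x i * M i a * x a) = x a * (\<Sum>j\<in>F. M a j * x j)"
    by (simp add: sum_distrib_left)
  have 3: "(\<Sum>j\<in>F. x a * M a j * x j) = x a * (\<Sum>j\<in>F. M a j * x j)"
    by (simp add: sum_distrib_left mult.assoc)
  show ?thesis unfolding 1 2 3 by (simp add: power2_eq_square)
qed

lemma psd_qf: "psd I M \<longleftrightarrow> (\<forall>i\<in>I. \<forall>j\<in>I. M i j = M j i) \<and> (\<forall>x. 0 \<le> qf I M x)"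
  unfolding psd_def qf_def by simp

lemma qf_cong: "(\<And>i. i \<in> I \<Longrightarrow> x i = y i) \<Longrightarrow> qf I M x = qf I M y"
  unfolding qf_def by (auto intro!: sum.cong)

lemma lin_unit:
  fixes x :: "nat \<Rightarrow> real"
  assumes "finite F" "j \<in> F" "\<forall>l\<in>F. x l = (if l = j then 1 else 0)"
  shows "(\<Sum>l\<in>F. c l * x l) = c j"
proof -
  have "(\<Sum>l\<in>F. c l * x l) = (\<Sum>l\<in>F. if l = j then c j else 0)"
    using assms(3) by (intro sum.cong refl) auto
  also have "\<dots> = c j" using assms(1,2) by simp
  finally show ?thesis .
qed
lemma qf_unit:
  fixes x :: "nat \<Rightarrow> real"
  assumes "finite F" "j \<in> F" "\<forall>l\<in>F. x l = (if l = j then 1 else 0)"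
  shows "qf F M x = M j j"
proof -
  have "qf F M x = (\<Sum>i\<in>F. x i * (\<Sum>l\<in>F. M i l * x l))"
    unfolding qf_def by (simp add: sum_distrib_left mult.assoc)
  also have "\<dots> = (\<Sum>i\<in>F. M i j * x i)"
    using lin_unit[OF assms, of "M _"] by (simp add: mult.commute)
  also have "\<dots> = M j j" using lin_unit[OF assms] .
  finally show ?thesis .
qed

lemma cholesky:
  assumes "finite I" "psd I M"
  shows "\<exists>u. \<forall>i\<in>I. \<forall>j\<in>I. ip (card I) (u i) (u j) = M i j"
  using assms
proof (induction I arbitrary: M rule: finite_induct)
  case empty
  then show ?case by auto
next
  case (insert a F)
  let ?I = "insert a F"
  have sym: "\<forall>i\<in>?I. \<forall>j\<in>?I. M i j = M j i" and pos: "\<And>x. 0 \<le> qf ?I M x"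
    using insert.prems unfolding psd_qf by blast+
  note qi = qf_insert[OF insert.hyps(1,2) sym]
  have Maa: "0 \<le> M a a"
  proof -
    define x where "x = (\<lambda>i. if i = a then 1 else (0::real))"
    have "(\<Sum>j\<in>F. M a j * x j) = 0" "qf F M x = 0"
      using insert.hyps(2) unfolding x_def qf_def by (auto intro!: sum.neutral)
    then show ?thesis using pos[of x] qi[of x] by (simp add: x_def)
  qed
  define M' where "M' = (\<lambda>i j. M i j - M a i * M a j / M a a)"
  have zero: "M a j = 0" if "M a a = 0" "j \<in> F" for j
  proof (rule ccontr)
    assume ne: "M a j \<noteq> 0"
    define c where "c = (M j j + 1) / (2 * M a j)"
    define x where "x = (\<lambda>i. if i = a then - c else if i = j then 1 else (0::real))"
    have "j \<noteq> a" using that insert.hyps(2) by auto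
    have xF: "\<forall>l\<in>F. x l = (if l = j then 1 else 0)"
      using insert.hyps(2) unfolding x_def by auto
    have s1: "(\<Sum>l\<in>F. M a l * x l) = M a j"
      using lin_unit[OF insert.hyps(1) that(2) xF] .
    have s2: "qf F M x = M j j"
      using qf_unit[OF insert.hyps(1) that(2) xF] .
    have "qf ?I M x = - 2 * c * M a j + M j j"
      using qi[of x] s1 s2 that by (simp add: x_def)
    also have "\<dots> = -1" using ne by (simp add: c_def field_simps)
    finally show False using pos[of x] by simp
  qed
  have "psd F M'"
    unfolding psd_qf
  proof (intro conjI allI ballI)
    fix i j assume "i \<in> F" "j \<in> F"
    then have "M i j = M j i" using sym by blast
    then show "M' i j = M' j i" by (simp add: M'_def)
  next
    fix x
    show "0 \<le> qf F M' x"
    proof (cases "M a a = 0")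
      case True
      then have "M' = M" using zero unfolding M'_def by (auto simp: fun_eq_iff)
      have "qf ?I M (x(a := 0)) = qf F M (x(a := 0))"
        using qi[of "x(a:=0)"] by simp
      also have "\<dots> = qf F M x" using insert.hyps(2) by (intro qf_cong) auto
      finally show ?thesis using pos[of "x(a:=0)"] \<open>M' = M\<close> by simp
    next
      case False
      define s where "s = (\<Sum>j\<in>F. M a j * x j)"
      have "qf F M' x = qf F M x - s\<^sup>2 / M a a"
      proof -
        have "qf F M' x = qf F M x - (\<Sum>i\<in>F. \<Sum>j\<in>F. (M a i * x i) * (M a j * x j) / M a a)"
          unfolding qf_def M'_def by (simp add: sum_subtractf algebra_simps)
        also have "(\<Sum>i\<in>F. \<Sum>j\<in>F. (M a i * x i) * (M a j * x j) / M a a) = s * s / M a a"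
          unfolding s_def by (simp add: sum_product sum_divide_distrib)
        finally show ?thesis by (simp add: power2_eq_square)
      qed
      moreover have "qf ?I M (x(a := - s / M a a)) = qf F M x - s\<^sup>2 / M a a"
      proof -
        have e1: "(\<Sum>j\<in>F. M a j * (x(a := - s / M a a)) j) = s"
          unfolding s_def using insert.hyps(2) by (intro sum.cong) auto
        have e2: "qf F M (x(a := - s / M a a)) = qf F M x"
          using insert.hyps(2) by (intro qf_cong) auto
        show ?thesis using qi[of "x(a := - s / M a a)"] e1 e2 False
          by (simp add: power2_eq_square field_simps)
      qed
      ultimately show ?thesis using pos[of "x(a := - s / M a a)"] by simp
    qed
  qed
  then obtain u' where u': "\<forall>i\<in>F. \<forall>j\<in>F. ip (card F) (u' i) (u' j) = M' i j"
    using insert.IH by blast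
  define m where "m = card F"
  define u where "u = (\<lambda>i. (if i = a then (\<lambda>_. 0) else u' i)
       (m := (if i = a then sqrt (M a a) else M a i / sqrt (M a a))))"
  have cI: "card ?I = Suc m" using insert.hyps m_def by simp
  have sq: "sqrt (M a a) * sqrt (M a a) = M a a" using Maa by simp
  have "\<forall>i\<in>?I. \<forall>j\<in>?I. ip (card ?I) (u i) (u j) = M i j"
  proof (intro ballI)
    fix i j assume i: "i \<in> ?I" and j: "j \<in> ?I"
    show "ip (card ?I) (u i) (u j) = M i j"
    proof (cases "i = a")
      case True
      show ?thesis
      proof (cases "j = a")
        case True
        then show ?thesis using \<open>i = a\<close> sq by (simp add: cI ip_Suc u_def ip_upd ip_zero_vec)
      next
        case False
        then have "j \<in> F" using j by auto
        then show ?thesis using \<open>i = a\<close> False sq zero[of j]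
          by (cases "M a a = 0") (auto simp: cI ip_Suc u_def ip_upd ip_zero_vec)
      qed
    next
      case False
      then have "i \<in> F" using i by auto
      show ?thesis
      proof (cases "j = a")
        case True
        have "M i a = M a i" using sym i j by blast
        then show ?thesis using \<open>i \<in> F\<close> False sq zero[of i] True
          by (cases "M a a = 0") (auto simp: cI ip_Suc u_def ip_upd ip_zero_vec)
      next
        case False
        then have "j \<in> F" using j by auto
        have "ip (card ?I) (u i) (u j) = M' i j + M a i / sqrt (M a a) * (M a j / sqrt (M a a))"
          using \<open>i \<in> F\<close> \<open>j \<in> F\<close> \<open>i \<noteq> a\<close> False u'
          by (simp add: cI ip_Suc u_def ip_upd m_def)
        also have "\<dots> = M i j"
          unfolding M'_def using sq Maa
          by (cases "M a a = 0") (auto simp: field_simps)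
        finally show ?thesis .
      qed
    qed
  qed
  then show ?case by blast
qed

definition vsum :: "nat set \<Rightarrow> (nat \<Rightarrow> nat \<Rightarrow> real) \<Rightarrow> nat \<Rightarrow> real" where
  "vsum I w = (\<lambda>q. \<Sum>i\<in>I. w i q)"

lemma ip_vsum_left: "ip d (vsum I w) y = (\<Sum>i\<in>I. ip d (w i) y)"
  unfolding ip_def vsum_def by (simp add: sum_distrib_right sum.swap[of _ I])

lemma ip_vsum_right: "ip d y (vsum I w) = (\<Sum>i\<in>I. ip d y (w i))"
  using ip_vsum_left[of d I w y] by (simp add: ip_sym)

lemma ip_scale: "ip d (\<lambda>q. a * x q) (\<lambda>q. b * y q) = a * b * ip d x y"
  "ip d x (\<lambda>q. b * y q) = b * ip d x y"
  unfolding ip_def by (simp_all add: sum_distrib_left mult_ac)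

lemma sum_sq_double: "(\<Sum>i\<in>I. \<Sum>j\<in>I. a i * a j) = (\<Sum>i\<in>I. a i)\<^sup>2" for a :: "'a \<Rightarrow> real"
  by (simp add: power2_eq_square sum_product)

lemma gram_nonneg:
  "0 \<le> (\<Sum>i\<in>I. \<Sum>j\<in>I. ip n (u i) (u j) * ip d (w i) (w j))"
proof -
  have "(\<Sum>i\<in>I. \<Sum>j\<in>I. ip n (u i) (u j) * ip d (w i) (w j))
      = (\<Sum>i\<in>I. \<Sum>j\<in>I. \<Sum>p<n. \<Sum>q<d. (u i p * w i q) * (u j p * w j q))"
    unfolding ip_def by (simp add: sum_product mult_ac)
  also have "\<dots> = (\<Sum>i\<in>I. \<Sum>p<n. \<Sum>j\<in>I. \<Sum>q<d. (u i p * w i q) * (u j p * w j q))"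
    by (intro sum.cong refl sum.swap)
  also have "\<dots> = (\<Sum>i\<in>I. \<Sum>p<n. \<Sum>q<d. \<Sum>j\<in>I. (u i p * w i q) * (u j p * w j q))"
    by (intro sum.cong refl sum.swap)
  also have "\<dots> = (\<Sum>p<n. \<Sum>i\<in>I. \<Sum>q<d. \<Sum>j\<in>I. (u i p * w i q) * (u j p * w j q))"
    by (rule sum.swap)
  also have "\<dots> = (\<Sum>p<n. \<Sum>q<d. \<Sum>i\<in>I. \<Sum>j\<in>I. (u i p * w i q) * (u j p * w j q))"
    by (intro sum.cong refl sum.swap)
  also have "\<dots> = (\<Sum>p<n. \<Sum>q<d. (\<Sum>i\<in>I. u i p * w i q)\<^sup>2)"
    by (intro sum.cong refl, rule sum_sq_double)
  also have "\<dots> \<ge> 0" by (intro sum_nonneg) simp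
  finally show ?thesis by simp
qed

lemma in_E_if_not_compl:
  assumes "i \<in> {1..n}" "j \<in> {1..n}" "i \<noteq> j" "{i, j} \<notin> complement n E"
  shows "{i, j} \<in> E"
  using assms unfolding complement_def by blast

lemma key:
  assumes rc: "rigid_vector_coloring n (complement n E) k u" and k: "k > 1"
    and I: "I \<subseteq> {1..n}"
    and w: "\<forall>i\<in>I. \<forall>j\<in>I. {i, j} \<in> E \<longrightarrow> ip d (w i) (w j) \<le> 0"
  shows "ip d (vsum I w) (vsum I w) \<le> k * (\<Sum>i\<in>I. ip d (w i) (w i))"
proof -
  have fin: "finite I" using I finite_subset by blast
  have trm: "(1 + (k - 1) * ip n (u i) (u j)) * ip d (w i) (w j)
      \<le> (if i = j then k * ip d (w i) (w i) else 0)" if "i \<in> I" "j \<in> I" for i j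
  proof (cases "i = j")
    case True
    then have "ip n (u i) (u j) = 1" using rc that I unfolding rigid_vector_coloring_def by auto
    then show ?thesis using True by simp
  next
    case False
    have ij: "i \<in> {1..n}" "j \<in> {1..n}" using that I by auto
    show ?thesis
    proof (cases "{i, j} \<in> complement n E")
      case True
      then have "ip n (u i) (u j) = - 1 / (k - 1)"
        using rc ij unfolding rigid_vector_coloring_def by blast
      then have "1 + (k - 1) * ip n (u i) (u j) = 0" using k by simp
      then show ?thesis using False by simp
    next
      case nc: False
      then have "ip n (u i) (u j) \<ge> - 1 / (k - 1)"
        using rc ij False unfolding rigid_vector_coloring_def by blast
      then have "(k - 1) * ip n (u i) (u j) \<ge> (k - 1) * (- 1 / (k - 1))"
        using k by (intro mult_left_mono) auto
      then have c: "1 + (k - 1) * ip n (u i) (u j) \<ge> 0" using k by simp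
      have "{i, j} \<in> E" using in_E_if_not_compl[OF ij False nc] .
      then have "ip d (w i) (w j) \<le> 0" using w that by blast
      then show ?thesis using c False by (simp add: mult_nonneg_nonpos)
    qed
  qed
  have "(\<Sum>i\<in>I. \<Sum>j\<in>I. (1 + (k - 1) * ip n (u i) (u j)) * ip d (w i) (w j))
      \<le> (\<Sum>i\<in>I. \<Sum>j\<in>I. (if i = j then k * ip d (w i) (w i) else 0))"
    using trm by (intro sum_mono) auto
  also have "\<dots> = (\<Sum>i\<in>I. k * ip d (w i) (w i))"
    using fin by simp
  also have "\<dots> = k * (\<Sum>i\<in>I. ip d (w i) (w i))" by (simp add: sum_distrib_left)
  finally have A: "(\<Sum>i\<in>I. \<Sum>j\<in>I. (1 + (k - 1) * ip n (u i) (u j)) * ip d (w i) (w j))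
      \<le> k * (\<Sum>i\<in>I. ip d (w i) (w i))" .
  have "(\<Sum>i\<in>I. \<Sum>j\<in>I. (1 + (k - 1) * ip n (u i) (u j)) * ip d (w i) (w j))
     = (\<Sum>i\<in>I. \<Sum>j\<in>I. ip d (w i) (w j)) + (k - 1) * (\<Sum>i\<in>I. \<Sum>j\<in>I. ip n (u i) (u j) * ip d (w i) (w j))"
  proof -
    have "(\<Sum>i\<in>I. \<Sum>j\<in>I. (1 + (k - 1) * ip n (u i) (u j)) * ip d (w i) (w j))
      = (\<Sum>i\<in>I. \<Sum>j\<in>I. ip d (w i) (w j) + (k - 1) * (ip n (u i) (u j) * ip d (w i) (w j)))"
      by (intro sum.cong refl) (simp add: algebra_simps)
    also have "\<dots> = (\<Sum>i\<in>I. \<Sum>j\<in>I. ip d (w i) (w j)) + (k - 1) * (\<Sum>i\<in>I. \<Sum>j\<in>I. ip n (u i) (u j) * ip d (w i) (w j))"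
      by (simp only: sum.distrib sum_distrib_left)
    finally show ?thesis .
  qed
  moreover have "ip d (vsum I w) (vsum I w) = (\<Sum>i\<in>I. \<Sum>j\<in>I. ip d (w i) (w j))"
    by (simp only: ip_vsum_left ip_vsum_right) (rule sum.swap)
  moreover have "0 \<le> (k - 1) * (\<Sum>i\<in>I. \<Sum>j\<in>I. ip n (u i) (u j) * ip d (w i) (w j))"
    using k gram_nonneg[of n u d w I] by simp
  ultimately show ?thesis using A by linarith
qed

lemma weak:
  assumes s: "s \<in> theta2'_values n E" and k: "k > 1"
    and rc: "rigid_vector_coloring n (complement n E) k u"
  shows "s \<le> k"
proof -
  obtain d v where sdef: "s = (\<Sum>i=1..n. cfun d (v i) (v 0))"
    and h0: "\<forall>i\<in>{1..n}. ip d (v 0) (v i) \<ge> 0"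
    and hE: "\<forall>i\<in>{1..n}. \<forall>j\<in>{1..n}. {i, j} \<in> E \<longrightarrow> ip d (v i) (v j) \<le> 0"
    using s unfolding theta2'_values_def by blast
  define N0 where "N0 = ip d (v 0) (v 0)"
  define \<beta> where "\<beta> = (\<lambda>i. ip d (v 0) (v i) / ip d (v i) (v i))"
  define w where "w = (\<lambda>i q. \<beta> i * v i q)"
  have \<beta>pos: "\<beta> i \<ge> 0" if "i \<in> {1..n}" for i
    using h0 that ip_nonneg[of d "v i"] unfolding \<beta>_def by (simp add: divide_nonneg_nonneg)
  have hw: "\<forall>i\<in>{1..n}. \<forall>j\<in>{1..n}. {i, j} \<in> E \<longrightarrow> ip d (w i) (w j) \<le> 0"
  proof (intro ballI impI)
    fix i j assume ij: "i \<in> {1..n}" "j \<in> {1..n}" "{i, j} \<in> E"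
    have "ip d (w i) (w j) = \<beta> i * \<beta> j * ip d (v i) (v j)"
      unfolding w_def by (rule ip_scale(1))
    moreover have "\<beta> i * \<beta> j \<ge> 0" using \<beta>pos ij by simp
    ultimately show "ip d (w i) (w j) \<le> 0" using hE ij by (simp add: mult_nonneg_nonpos)
  qed
  have w0: "ip d (v 0) (w i) = (ip d (v 0) (v i))\<^sup>2 / ip d (v i) (v i)" for i
    unfolding w_def \<beta>_def ip_scale(2) by (simp add: power2_eq_square)
  have ww: "ip d (w i) (w i) = ip d (v 0) (w i)" for i
  proof (cases "ip d (v i) (v i) = 0")
    case True
    then show ?thesis unfolding w_def \<beta>_def ip_scale by simp
  next
    case False
    then show ?thesis unfolding w_def \<beta>_def ip_scale by (simp add: power2_eq_square field_simps)
  qed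
  have cf: "cfun d (v i) (v 0) = ip d (v 0) (w i) / N0" for i
    unfolding cfun_def w0 N0_def by (auto simp: ip_sym[of d "v i" "v 0"] field_simps)
  define P where "P = vsum {1..n} w"
  define A where "A = ip d (v 0) P"
  have sA: "s = A / N0"
    unfolding sdef A_def P_def ip_vsum_right cf by (simp add: sum_divide_distrib)
  have Apos: "A \<ge> 0"
    unfolding A_def P_def ip_vsum_right w0 by (intro sum_nonneg divide_nonneg_nonneg ip_nonneg) simp
  have "ip d P P \<le> k * (\<Sum>i\<in>{1..n}. ip d (w i) (w i))"
    unfolding P_def by (rule key[OF rc k _ hw]) simp
  also have "\<dots> = k * A" unfolding A_def P_def ip_vsum_right ww ..
  finally have PP: "ip d P P \<le> k * A" .
  have "A\<^sup>2 \<le> N0 * ip d P P" unfolding A_def N0_def by (rule ip_CS)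
  also have "\<dots> \<le> N0 * (k * A)" using PP ip_nonneg[of d "v 0"] unfolding N0_def
    by (intro mult_left_mono) auto
  finally have AA: "A\<^sup>2 \<le> N0 * (k * A)" .
  show ?thesis
  proof (cases "N0 = 0")
    case True
    then show ?thesis using sA k by simp
  next
    case False
    then have N0p: "N0 > 0" using ip_nonneg[of d "v 0"] unfolding N0_def by linarith
    have "A \<le> k * N0"
    proof (cases "A = 0")
      case True then show ?thesis using k N0p by simp
    next
      case False
      then have "A > 0" using Apos by simp
      then show ?thesis using AA by (simp add: power2_eq_square) (smt (verit) mult_le_cancel_left_pos mult.assoc mult.commute)
    qed
    then show ?thesis using sA N0p by (simp add: divide_le_eq)
  qed
qed

definition SP :: "nat \<Rightarrow> (nat \<times> nat \<Rightarrow> real) set" where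
  "SP n = {B. (\<forall>p. p \<notin> {1..n} \<times> {1..n} \<longrightarrow> B p = 0) \<and> psd {1..n} (curry B)
              \<and> (\<Sum>i\<in>{1..n}. B (i, i)) = 1}"

lemma cont_coord [continuous_intros]: "continuous_on S (\<lambda>B::'a \<Rightarrow> real. B p)"
  by (rule continuous_on_subset[OF continuous_on_product_coordinates]) simp

lemma closed_const_imp: "closed {x. Q x} \<Longrightarrow> closed {x. P \<longrightarrow> Q x}"
  by (cases P) auto

lemma SP_closed: "closed (SP n)"
proof -
  have eq: "SP n = {B. \<forall>p. p \<notin> {1..n} \<times> {1..n} \<longrightarrow> B p = 0}
     \<inter> {B. \<forall>i. \<forall>j. i \<in> {1..n} \<and> j \<in> {1..n} \<longrightarrow> B (i, j) = B (j, i)}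
     \<inter> {B. \<forall>x. 0 \<le> qf {1..n} (curry B) x}
     \<inter> {B. (\<Sum>i\<in>{1..n}. B (i, i)) = 1}"
    unfolding SP_def psd_qf curry_def by blast
  have c1: "closed {B::nat\<times>nat\<Rightarrow>real. \<forall>p. p \<notin> {1..n} \<times> {1..n} \<longrightarrow> B p = 0}"
    by (intro closed_Collect_all closed_const_imp closed_Collect_eq continuous_intros)
  have c2: "closed {B::nat\<times>nat\<Rightarrow>real. \<forall>i. \<forall>j. i \<in> {1..n} \<and> j \<in> {1..n} \<longrightarrow> B (i, j) = B (j, i)}"
    by (intro closed_Collect_all closed_const_imp closed_Collect_eq continuous_intros)
  have c3: "closed {B::nat\<times>nat\<Rightarrow>real. \<forall>x. 0 \<le> qf {1..n} (curry B) x}"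
    unfolding qf_def curry_def
    by (intro closed_Collect_all closed_Collect_le continuous_intros)
  have c4: "closed {B::nat\<times>nat\<Rightarrow>real. (\<Sum>i\<in>{1..n}. B (i, i)) = 1}"
    by (intro closed_Collect_eq continuous_intros)
  show ?thesis unfolding eq by (intro closed_Int c1 c2 c3 c4)
qed

lemma lin_two:
  fixes x :: "nat \<Rightarrow> real"
  assumes "finite F" "i \<in> F" "j \<in> F" "i \<noteq> j"
    "\<forall>l\<in>F. x l = (if l = i then \<alpha> else if l = j then \<beta> else 0)"
  shows "(\<Sum>l\<in>F. c l * x l) = \<alpha> * c i + \<beta> * c j"
proof -
  have "(\<Sum>l\<in>F. c l * x l) = (\<Sum>l\<in>F. (if l = i then \<alpha> * c i else 0) + (if l = j then \<beta> * c j else 0))"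
    using assms(4,5) by (intro sum.cong refl) auto
  also have "\<dots> = \<alpha> * c i + \<beta> * c j" using assms(1,2,3) by (simp add: sum.distrib)
  finally show ?thesis .
qed

lemma qf_two:
  fixes x :: "nat \<Rightarrow> real"
  assumes "finite F" "i \<in> F" "j \<in> F" "i \<noteq> j"
    "\<forall>l\<in>F. x l = (if l = i then \<alpha> else if l = j then \<beta> else 0)"
  shows "qf F M x = \<alpha> * (\<alpha> * M i i + \<beta> * M i j) + \<beta> * (\<alpha> * M j i + \<beta> * M j j)"
proof -
  have "qf F M x = (\<Sum>l\<in>F. x l * (\<Sum>m\<in>F. M l m * x m))"
    unfolding qf_def by (simp add: sum_distrib_left mult.assoc)
  also have "\<dots> = (\<Sum>l\<in>F. (\<alpha> * M l i + \<beta> * M l j) * x l)"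
    using lin_two[OF assms, of "M _"] by (simp add: mult.commute)
  also have "\<dots> = \<alpha> * (\<alpha> * M i i + \<beta> * M i j) + \<beta> * (\<alpha> * M j i + \<beta> * M j j)"
    by (rule lin_two[OF assms])
  finally show ?thesis .
qed

lemma SP_diag:
  assumes "B \<in> SP n" "i \<in> {1..n}"
  shows "0 \<le> B (i, i)" "B (i, i) \<le> 1"
proof -
  have ps: "psd {1..n} (curry B)" and tr: "(\<Sum>i\<in>{1..n}. B (i, i)) = 1"
    using assms(1) unfolding SP_def by auto
  have "qf {1..n} (curry B) (\<lambda>l. if l = i then 1 else 0) = B (i, i)"
    using qf_unit[of "{1..n}" i "\<lambda>l. if l = i then 1 else 0" "curry B"] assms(2) by simp
  then show d: "0 \<le> B (i, i)" using ps unfolding psd_qf by metis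
  have "\<forall>j\<in>{1..n}. 0 \<le> B (j, j)"
  proof
    fix j assume j: "j \<in> {1..n}"
    have "qf {1..n} (curry B) (\<lambda>l. if l = j then 1 else 0) = B (j, j)"
      using qf_unit[of "{1..n}" j "\<lambda>l. if l = j then 1 else 0" "curry B"] j by simp
    then show "0 \<le> B (j, j)" using ps unfolding psd_qf by metis
  qed
  then show "B (i, i) \<le> 1"
    using member_le_sum[of i "{1..n}" "\<lambda>j. B (j, j)"] assms(2) tr by simp
qed

lemma SP_bound:
  assumes "B \<in> SP n" "p \<in> {1..n} \<times> {1..n}"
  shows "\<bar>B p\<bar> \<le> 1"
proof -
  obtain i j where p: "p = (i, j)" "i \<in> {1..n}" "j \<in> {1..n}" using assms(2) by auto
  have ps: "psd {1..n} (curry B)" and tr: "(\<Sum>i\<in>{1..n}. B (i, i)) = 1"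
    and nd: "\<forall>j\<in>{1..n}. 0 \<le> B (j, j)"
    using assms(1) SP_diag[OF assms(1)] unfolding SP_def by auto
  show ?thesis
  proof (cases "i = j")
    case True
    then show ?thesis using SP_diag[OF assms(1) p(2)] p by simp
  next
    case False
    have sy: "B (i, j) = B (j, i)" using ps p unfolding psd_qf by auto
    have q1: "qf {1..n} (curry B) (\<lambda>l. if l = i then 1 else if l = j then 1 else 0)
        = B (i, i) + B (j, j) + 2 * B (i, j)"
      using qf_two[of "{1..n}" i j "\<lambda>l. if l = i then 1 else if l = j then 1 else 0" 1 1 "curry B"]
        p False sy by simp
    have q2: "qf {1..n} (curry B) (\<lambda>l. if l = i then 1 else if l = j then -1 else 0)
        = B (i, i) + B (j, j) - 2 * B (i, j)"
      using qf_two[of "{1..n}" i j "\<lambda>l. if l = i then 1 else if l = j then -1 else 0" 1 "-1" "curry B"]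
        p False sy by simp
    have "0 \<le> B (i, i) + B (j, j) + 2 * B (i, j)" "0 \<le> B (i, i) + B (j, j) - 2 * B (i, j)"
      using ps q1 q2 unfolding psd_qf by metis+
    moreover have "B (i, i) + B (j, j) \<le> 1"
    proof -
      have "(\<Sum>l\<in>{i, j}. B (l, l)) \<le> (\<Sum>l\<in>{1..n}. B (l, l))"
        using p nd by (intro sum_mono2) auto
      then show ?thesis using False tr by simp
    qed
    ultimately show ?thesis unfolding p(1) abs_le_iff by linarith
  qed
qed

lemma SP_compact: "compact (SP n)"
proof -
  define Box where "Box = PiE UNIV (\<lambda>p::nat\<times>nat. if p \<in> {1..n} \<times> {1..n} then {-1..1::real} else {0})"
  have "compactin (product_topology (\<lambda>_. euclidean) UNIV) Box"
    unfolding Box_def by (subst compactin_PiE) auto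
  then have "compact Box" by (simp add: euclidean_product_topology)
  moreover have "SP n \<subseteq> Box"
  proof
    fix B assume B: "B \<in> SP n"
    show "B \<in> Box"
    proof -
      have z: "\<forall>p. p \<notin> {1..n} \<times> {1..n} \<longrightarrow> B p = 0" using B unfolding SP_def by blast
      show ?thesis using SP_bound[OF B] z by (auto simp: Box_def abs_le_iff PiE_def extensional_def)
    qed
  qed
  ultimately have "compact (Box \<inter> SP n)" using SP_closed by blast
  then show ?thesis using \<open>SP n \<subseteq> Box\<close> by (simp add: Int_absorb1)
qed

definition Ed :: "nat \<Rightarrow> nat set set \<Rightarrow> (nat \<times> nat) set" where
  "Ed n E = {p \<in> {1..n} \<times> {1..n}. {fst p, snd p} \<in> E}"

definition outer :: "nat \<Rightarrow> (nat \<Rightarrow> real) \<Rightarrow> (nat \<times> nat \<Rightarrow> real)" where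
  "outer n y = (\<lambda>p. if p \<in> {1..n} \<times> {1..n} then y (fst p) * y (snd p) else 0)"

definition phi :: "nat \<Rightarrow> nat set set \<Rightarrow> real \<Rightarrow> (nat \<times> nat \<Rightarrow> real) \<Rightarrow> real" where
  "phi n E k B = (max 0 (k - (\<Sum>p\<in>{1..n} \<times> {1..n}. B p)))\<^sup>2 + (\<Sum>p\<in>Ed n E. (max 0 (B p))\<^sup>2)"

lemma Ed_sub: "Ed n E \<subseteq> {1..n} \<times> {1..n}" unfolding Ed_def by auto

lemma Ed_fin: "finite (Ed n E)" using Ed_sub finite_subset by blast

lemma Ed_sym: "(i, j) \<in> Ed n E \<longleftrightarrow> (j, i) \<in> Ed n E"
  unfolding Ed_def by (auto simp: insert_commute)

lemma Ed_diag: "graph_on n E \<Longrightarrow> (i, i) \<notin> Ed n E"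
  unfolding Ed_def graph_on_def by (auto simp: doubleton_eq_iff)

lemma outer_qf: "qf {1..n} (curry (outer n y)) x = (\<Sum>i\<in>{1..n}. x i * y i)\<^sup>2"
proof -
  have "qf {1..n} (curry (outer n y)) x = (\<Sum>i\<in>{1..n}. \<Sum>j\<in>{1..n}. (x i * y i) * (x j * y j))"
    unfolding qf_def outer_def curry_def by (intro sum.cong refl) (auto simp: mult_ac)
  also have "\<dots> = (\<Sum>i\<in>{1..n}. x i * y i)\<^sup>2" by (rule sum_sq_double)
  finally show ?thesis .
qed

lemma outer_SP:
  assumes "(\<Sum>i\<in>{1..n}. (y i)\<^sup>2) = 1"
  shows "outer n y \<in> SP n"
proof -
  have "psd {1..n} (curry (outer n y))"
    unfolding psd_qf outer_qf by (auto simp: outer_def mult.commute)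
  moreover have "(\<Sum>i\<in>{1..n}. outer n y (i, i)) = 1"
    using assms by (simp add: outer_def power2_eq_square)
  ultimately show ?thesis unfolding SP_def by (auto simp: outer_def)
qed

lemma outer_sum: "(\<Sum>p\<in>{1..n} \<times> {1..n}. outer n y p) = (\<Sum>i\<in>{1..n}. y i)\<^sup>2"
proof -
  have "(\<Sum>p\<in>{1..n} \<times> {1..n}. outer n y p) = (\<Sum>i\<in>{1..n}. \<Sum>j\<in>{1..n}. outer n y (i, j))"
    by (simp add: sum.cartesian_product)
  also have "\<dots> = (\<Sum>i\<in>{1..n}. \<Sum>j\<in>{1..n}. y i * y j)"
    unfolding outer_def by (intro sum.cong refl) auto
  also have "\<dots> = (\<Sum>i\<in>{1..n}. y i)\<^sup>2" by (rule sum_sq_double)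
  finally show ?thesis .
qed

lemma g_ineq: "(max 0 (x + h))\<^sup>2 \<le> (max 0 x)\<^sup>2 + 2 * max 0 x * h + h\<^sup>2" for x h :: real
proof (cases "x \<ge> 0")
  case True
  have "0 \<le> (x + h)\<^sup>2" by simp
  then show ?thesis using True by (cases "x + h \<ge> 0") (auto simp: max_def power2_eq_square algebra_simps)
next
  case False
  show ?thesis
  proof (cases "x + h \<ge> 0")
    case True
    then have "(x + h) * (x + h) \<le> h * h" using False by (intro mult_mono) auto
    then show ?thesis using False True by (simp add: max_def power2_eq_square)
  next
    case False
    then show ?thesis using \<open>\<not> x \<ge> 0\<close> by (simp add: max_def)
  qed
qed

lemma qf_lin_comb:
  "qf I (\<lambda>i j. M i j + e * (N i j - M i j)) x = (1 - e) * qf I M x + e * qf I N x"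
proof -
  have "qf I (\<lambda>i j. M i j + e * (N i j - M i j)) x
      = (\<Sum>i\<in>I. \<Sum>j\<in>I. (1 - e) * (x i * M i j * x j) + e * (x i * N i j * x j))"
    unfolding qf_def by (intro sum.cong refl) (simp add: algebra_simps)
  also have "\<dots> = (1 - e) * qf I M x + e * qf I N x"
    unfolding qf_def by (simp only: sum.distrib sum_distrib_left)
  finally show ?thesis .
qed

lemma SP_convex:
  assumes B: "B \<in> SP n" and C: "C \<in> SP n" and e: "0 \<le> e" "e \<le> 1"
  shows "(\<lambda>p. B p + e * (C p - B p)) \<in> SP n"
proof -
  have zB: "\<forall>p. p \<notin> {1..n} \<times> {1..n} \<longrightarrow> B p = 0" and zC: "\<forall>p. p \<notin> {1..n} \<times> {1..n} \<longrightarrow> C p = 0"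
    using B C unfolding SP_def by blast+
  have pB: "psd {1..n} (curry B)" and pC: "psd {1..n} (curry C)"
    using B C unfolding SP_def by blast+
  have tB: "(\<Sum>i\<in>{1..n}. B (i, i)) = 1" and tC: "(\<Sum>i\<in>{1..n}. C (i, i)) = 1"
    using B C unfolding SP_def by blast+
  have "psd {1..n} (curry (\<lambda>p. B p + e * (C p - B p)))"
    unfolding psd_qf
  proof (intro conjI ballI allI)
    fix i j assume "i \<in> {1..n}" "j \<in> {1..n}"
    then have "B (i, j) = B (j, i)" "C (i, j) = C (j, i)" using pB pC unfolding psd_qf curry_def by blast+
    then show "curry (\<lambda>p. B p + e * (C p - B p)) i j = curry (\<lambda>p. B p + e * (C p - B p)) j i"
      by simp
  next
    fix x
    have "qf {1..n} (curry (\<lambda>p. B p + e * (C p - B p))) x = (1 - e) * qf {1..n} (curry B) x + e * qf {1..n} (curry C) x"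
      using qf_lin_comb[of "{1..n}" "curry B" e "curry C" x] by (simp add: curry_def)
    moreover have "0 \<le> qf {1..n} (curry B) x" "0 \<le> qf {1..n} (curry C) x"
      using pB pC unfolding psd_qf by blast+
    ultimately show "0 \<le> qf {1..n} (curry (\<lambda>p. B p + e * (C p - B p))) x"
      using e by simp
  qed
  moreover have "(\<Sum>i\<in>{1..n}. B (i, i) + e * (C (i, i) - B (i, i))) = 1"
    using tB tC by (simp add: sum.distrib sum_subtractf sum_distrib_left[symmetric])
  ultimately show ?thesis unfolding SP_def using zB zC by auto
qed

lemma qf_scale: "qf I M (\<lambda>i. c * y i) = c\<^sup>2 * qf I M y"
  unfolding qf_def by (simp add: sum_distrib_left power2_eq_square mult_ac)

lemma qf_shift:
  "qf I (\<lambda>i j. (if i = j then t else 0) + L i j - 1) y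
     = t * (\<Sum>i\<in>I. (y i)\<^sup>2) + (\<Sum>i\<in>I. \<Sum>j\<in>I. y i * L i j * y j) - (\<Sum>i\<in>I. y i)\<^sup>2"
  if "finite I"
proof -
  have "qf I (\<lambda>i j. (if i = j then t else 0) + L i j - 1) y
     = (\<Sum>i\<in>I. \<Sum>j\<in>I. ((if i = j then t * (y i)\<^sup>2 else 0) + y i * L i j * y j) - y i * y j)"
    unfolding qf_def by (intro sum.cong refl) (auto simp: algebra_simps power2_eq_square)
  also have "\<dots> = (\<Sum>i\<in>I. t * (y i)\<^sup>2) + (\<Sum>i\<in>I. \<Sum>j\<in>I. y i * L i j * y j) - (\<Sum>i\<in>I. \<Sum>j\<in>I. y i * y j)"
    using that by (simp add: sum_subtractf sum.distrib)
  also have "\<dots> = t * (\<Sum>i\<in>I. (y i)\<^sup>2) + (\<Sum>i\<in>I. \<Sum>j\<in>I. y i * L i j * y j) - (\<Sum>i\<in>I. y i)\<^sup>2"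
    by (simp add: sum_distrib_left sum_sq_double)
  finally show ?thesis .
qed

lemma exists_B:
  assumes n: "1 \<le> n" and G: "graph_on n E"
    and noB: "\<not> (\<exists>B\<in>SP n. (\<forall>p\<in>Ed n E. B p \<le> 0) \<and> k \<le> (\<Sum>p\<in>{1..n} \<times> {1..n}. B p))"
  shows "\<exists>t<k. \<exists>L. (\<forall>i j. 0 \<le> L i j \<and> L i j = L j i \<and> (L i j \<noteq> 0 \<longrightarrow> (i, j) \<in> Ed n E))
            \<and> psd {1..n} (\<lambda>i j. (if i = j then t else 0) + L i j - 1)"
proof -
  define V where "V = {1..n}"
  define e1 where "e1 = (\<lambda>i::nat. if i = 1 then 1 else (0::real))"
  have e1sq: "(\<Sum>i\<in>{1..n}. (e1 i)\<^sup>2) = 1"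
  proof -
    have "(\<Sum>i\<in>{1..n}. (e1 i)\<^sup>2) = (\<Sum>i\<in>{1..n}. e1 i)" by (intro sum.cong refl) (simp add: e1_def)
    also have "\<dots> = 1" using n by (simp add: e1_def)
    finally show ?thesis .
  qed
  have C1: "outer n e1 \<in> SP n" using outer_SP[OF e1sq] .
  have ne: "SP n \<noteq> {}" using C1 by blast
  have cont: "continuous_on (SP n) (phi n E k)"
    unfolding phi_def by (intro continuous_intros)
  obtain B0 where B0: "B0 \<in> SP n" "\<forall>C\<in>SP n. phi n E k B0 \<le> phi n E k C"
    using continuous_attains_inf[OF SP_compact ne cont] by blast
  define a where "a = max 0 (k - (\<Sum>p\<in>V \<times> V. B0 p))"
  define \<mu> where "\<mu> = (\<lambda>p. max 0 (B0 p))"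
  define \<phi>0 where "\<phi>0 = phi n E k B0"
  have \<phi>0_eq: "\<phi>0 = a\<^sup>2 + (\<Sum>p\<in>Ed n E. (\<mu> p)\<^sup>2)"
    unfolding \<phi>0_def phi_def a_def \<mu>_def V_def ..
  have a0: "a \<ge> 0" unfolding a_def by simp
  have \<mu>0: "\<mu> p \<ge> 0" for p unfolding \<mu>_def by simp
  have \<phi>0_pos: "\<phi>0 > 0"
  proof (rule ccontr)
    assume np: "\<not> \<phi>0 > 0"
    have s: "0 \<le> (\<Sum>p\<in>Ed n E. (\<mu> p)\<^sup>2)" by (intro sum_nonneg) simp
    have "0 \<le> a\<^sup>2" by simp
    then have az: "a\<^sup>2 = 0" and sz: "(\<Sum>p\<in>Ed n E. (\<mu> p)\<^sup>2) = 0"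
      using s np \<phi>0_eq by linarith+
    have "k \<le> (\<Sum>p\<in>V \<times> V. B0 p)" using az unfolding a_def by (simp add: max_def split: if_splits)
    moreover have "\<forall>p\<in>Ed n E. B0 p \<le> 0"
    proof
      fix p assume p: "p \<in> Ed n E"
      have "\<forall>q\<in>Ed n E. (\<mu> q)\<^sup>2 = 0" using sz Ed_fin by (subst (asm) sum_nonneg_eq_0_iff) auto
      then have "\<mu> p = 0" using p by simp
      then show "B0 p \<le> 0" unfolding \<mu>_def by (simp add: max_def split: if_splits)
    qed
    ultimately show False using noB B0(1) unfolding V_def by blast
  qed
  have FO: "a * (\<Sum>p\<in>V \<times> V. C p) - (\<Sum>p\<in>Ed n E. \<mu> p * C p) \<le> a * k - \<phi>0"
    if C: "C \<in> SP n" for C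
  proof -
    define D where "D = (\<Sum>p\<in>V \<times> V. C p) - (\<Sum>p\<in>V \<times> V. B0 p)"
    define L where "L = - a * D + (\<Sum>p\<in>Ed n E. \<mu> p * (C p - B0 p))"
    define R where "R = D\<^sup>2 + (\<Sum>p\<in>Ed n E. (C p - B0 p)\<^sup>2)"
    have R0: "R \<ge> 0" unfolding R_def by (intro add_nonneg_nonneg sum_nonneg) auto
    have step: "0 \<le> 2 * L + e * R" if e: "0 < e" "e \<le> 1" for e
    proof -
      define Be where "Be = (\<lambda>p. B0 p + e * (C p - B0 p))"
      have "Be \<in> SP n" using SP_convex[OF B0(1) C] e unfolding Be_def by simp
      then have ge: "\<phi>0 \<le> phi n E k Be" using B0(2) unfolding \<phi>0_def by blast
      have sBe: "(\<Sum>p\<in>V \<times> V. Be p) = (\<Sum>p\<in>V \<times> V. B0 p) + e * D"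
        unfolding Be_def D_def by (simp add: sum.distrib sum_subtractf sum_distrib_left[symmetric])
      have t1: "(max 0 (k - (\<Sum>p\<in>V \<times> V. Be p)))\<^sup>2 \<le> a\<^sup>2 + 2 * a * (- e * D) + (- e * D)\<^sup>2"
      proof -
        have eq: "k - (\<Sum>p\<in>V \<times> V. Be p) = (k - (\<Sum>p\<in>V \<times> V. B0 p)) + (- e * D)"
          unfolding sBe by simp
        have "(max 0 (k - (\<Sum>p\<in>V \<times> V. Be p)))\<^sup>2 = (max 0 ((k - (\<Sum>p\<in>V \<times> V. B0 p)) + (- e * D)))\<^sup>2"
          unfolding eq ..
        also have "\<dots> \<le> (max 0 (k - (\<Sum>p\<in>V \<times> V. B0 p)))\<^sup>2 + 2 * max 0 (k - (\<Sum>p\<in>V \<times> V. B0 p)) * (- e * D) + (- e * D)\<^sup>2"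
          by (rule g_ineq)
        finally show ?thesis unfolding a_def .
      qed
      have t2: "(\<Sum>p\<in>Ed n E. (max 0 (Be p))\<^sup>2)
          \<le> (\<Sum>p\<in>Ed n E. (\<mu> p)\<^sup>2 + 2 * \<mu> p * (e * (C p - B0 p)) + (e * (C p - B0 p))\<^sup>2)"
        unfolding Be_def \<mu>_def by (intro sum_mono g_ineq)
      have t3: "(\<Sum>p\<in>Ed n E. (\<mu> p)\<^sup>2 + 2 * \<mu> p * (e * (C p - B0 p)) + (e * (C p - B0 p))\<^sup>2)
          = (\<Sum>p\<in>Ed n E. (\<mu> p)\<^sup>2) + 2 * e * (\<Sum>p\<in>Ed n E. \<mu> p * (C p - B0 p))
            + e\<^sup>2 * (\<Sum>p\<in>Ed n E. (C p - B0 p)\<^sup>2)"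
      proof -
        have "(\<Sum>p\<in>Ed n E. (\<mu> p)\<^sup>2 + 2 * \<mu> p * (e * (C p - B0 p)) + (e * (C p - B0 p))\<^sup>2)
          = (\<Sum>p\<in>Ed n E. (\<mu> p)\<^sup>2 + (2 * e) * (\<mu> p * (C p - B0 p)) + e\<^sup>2 * (C p - B0 p)\<^sup>2)"
          by (intro sum.cong refl) (simp add: power2_eq_square mult_ac)
        also have "\<dots> = (\<Sum>p\<in>Ed n E. (\<mu> p)\<^sup>2) + 2 * e * (\<Sum>p\<in>Ed n E. \<mu> p * (C p - B0 p))
            + e\<^sup>2 * (\<Sum>p\<in>Ed n E. (C p - B0 p)\<^sup>2)"
          by (simp only: sum.distrib sum_distrib_left)
        finally show ?thesis .
      qed
      have "phi n E k Be = (max 0 (k - (\<Sum>p\<in>V \<times> V. Be p)))\<^sup>2 + (\<Sum>p\<in>Ed n E. (max 0 (Be p))\<^sup>2)"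
        unfolding phi_def V_def ..
      also have "\<dots> \<le> \<phi>0 + e * (2 * L) + e\<^sup>2 * R"
        using t1 t2 t3 unfolding \<phi>0_eq L_def R_def by (simp add: algebra_simps power2_eq_square)
      finally have "\<phi>0 \<le> \<phi>0 + e * (2 * L) + e\<^sup>2 * R" using ge by linarith
      then have "0 \<le> e * (2 * L + e * R)" by (simp add: algebra_simps power2_eq_square)
      then show ?thesis using e by (simp add: zero_le_mult_iff)
    qed
    have L0: "L \<ge> 0"
    proof (rule ccontr)
      assume "\<not> L \<ge> 0"
      then have Ln: "L < 0" by simp
      define e where "e = min 1 (- L / (R + 1))"
      have "L / (R + 1) < 0" using Ln R0 by (intro divide_neg_pos) auto
      then have e0: "0 < e" "e \<le> 1" by (auto simp: e_def)
      have "e * R \<le> (- L / (R + 1)) * R" using R0 by (intro mult_right_mono) (auto simp: e_def)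
      also have "\<dots> < - L"
      proof -
        have "R < R + 1" by simp
        then have "(- L) * R < (- L) * (R + 1)" using Ln by (intro mult_strict_left_mono) auto
        then show ?thesis using R0 by (simp add: field_simps)
      qed
      finally have "2 * L + e * R < 0" using Ln by linarith
      then show False using step[OF e0] by linarith
    qed
    have aB: "a * (\<Sum>p\<in>V \<times> V. B0 p) = a * k - a\<^sup>2"
      unfolding a_def by (auto simp: max_def power2_eq_square algebra_simps)
    have \<mu>B: "(\<Sum>p\<in>Ed n E. \<mu> p * B0 p) = (\<Sum>p\<in>Ed n E. (\<mu> p)\<^sup>2)"
      unfolding \<mu>_def by (intro sum.cong refl) (auto simp: max_def power2_eq_square)
    have "L = - a * (\<Sum>p\<in>V \<times> V. C p) + a * (\<Sum>p\<in>V \<times> V. B0 p)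
              + (\<Sum>p\<in>Ed n E. \<mu> p * C p) - (\<Sum>p\<in>Ed n E. \<mu> p * B0 p)"
      unfolding L_def D_def by (simp add: right_diff_distrib sum_subtractf algebra_simps)
    then show ?thesis using L0 aB \<mu>B \<phi>0_eq by linarith
  qed
  have s1: "(\<Sum>p\<in>V \<times> V. outer n e1 p) = 1"
    unfolding V_def outer_sum using n by (simp add: e1_def)
  have s2: "(\<Sum>p\<in>Ed n E. \<mu> p * outer n e1 p) = 0"
  proof (intro sum.neutral ballI)
    fix p assume p: "p \<in> Ed n E"
    obtain i j where pij: "p = (i, j)" by fastforce
    have "i \<noteq> j" using Ed_diag[OF G] p pij by blast
    then show "\<mu> p * outer n e1 p = 0" by (simp add: outer_def e1_def pij)
  qed
  have "a * 1 - 0 \<le> a * k - \<phi>0" using FO[OF C1] s1 s2 by simp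
  then have apos: "a > 0" using \<phi>0_pos a0 by (cases "a = 0") auto
  define t where "t = k - \<phi>0 / a"
  have tk: "t < k" unfolding t_def using apos \<phi>0_pos by simp
  define L where "L = (\<lambda>i j. if (i, j) \<in> Ed n E then \<mu> (i, j) / a else 0)"
  have B0sym: "B0 (i, j) = B0 (j, i)" if "i \<in> V" "j \<in> V" for i j
    using B0(1) that unfolding SP_def psd_qf V_def curry_def by blast
  have Lprop: "\<forall>i j. 0 \<le> L i j \<and> L i j = L j i \<and> (L i j \<noteq> 0 \<longrightarrow> (i, j) \<in> Ed n E)"
  proof (intro allI conjI impI)
    fix i j
    show "0 \<le> L i j" unfolding L_def using \<mu>0 apos by simp
    show "L i j \<noteq> 0 \<Longrightarrow> (i, j) \<in> Ed n E" unfolding L_def by (simp split: if_splits)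
    show "L i j = L j i"
    proof (cases "(i, j) \<in> Ed n E")
      case True
      then have "i \<in> V" "j \<in> V" using Ed_sub unfolding V_def by blast+
      then have "\<mu> (i, j) = \<mu> (j, i)" using B0sym unfolding \<mu>_def by simp
      then show ?thesis using True Ed_sym unfolding L_def by simp
    next
      case False
      then show ?thesis using Ed_sym unfolding L_def by simp
    qed
  qed
  have psdM: "psd {1..n} (\<lambda>i j. (if i = j then t else 0) + L i j - 1)"
    unfolding psd_qf
  proof (intro conjI ballI allI)
    fix i j show "(if i = j then t else 0) + L i j - 1 = (if j = i then t else 0) + L j i - 1"
      using Lprop by auto
  next
    fix x :: "nat \<Rightarrow> real"
    define N where "N = (\<Sum>i\<in>V. (x i)\<^sup>2)"
    have N0: "N \<ge> 0" unfolding N_def by (intro sum_nonneg) simp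
    show "0 \<le> qf {1..n} (\<lambda>i j. (if i = j then t else 0) + L i j - 1) x"
    proof (cases "N = 0")
      case True
      then have "\<forall>i\<in>V. (x i)\<^sup>2 = 0" unfolding N_def V_def by (subst (asm) sum_nonneg_eq_0_iff) auto
      then have "qf {1..n} (\<lambda>i j. (if i = j then t else 0) + L i j - 1) x
          = qf {1..n} (\<lambda>i j. (if i = j then t else 0) + L i j - 1) (\<lambda>_. 0)"
        unfolding V_def by (intro qf_cong) simp
      then show ?thesis by (simp add: qf_def)
    next
      case False
      then have Np: "N > 0" using N0 by simp
      define y where "y = (\<lambda>i. x i / sqrt N)"
      have xy: "x i = sqrt N * y i" for i unfolding y_def using Np by simp
      have ysq: "(\<Sum>i\<in>{1..n}. (y i)\<^sup>2) = 1"
      proof -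
        have "(\<Sum>i\<in>{1..n}. (y i)\<^sup>2) = (\<Sum>i\<in>{1..n}. (x i)\<^sup>2 / N)"
          unfolding y_def using Np by (simp add: power_divide)
        also have "\<dots> = 1" using Np unfolding N_def V_def by (simp add: sum_divide_distrib[symmetric])
        finally show ?thesis .
      qed
      have FOy: "a * (\<Sum>i\<in>V. y i)\<^sup>2 - (\<Sum>p\<in>Ed n E. \<mu> p * (y (fst p) * y (snd p))) \<le> a * k - \<phi>0"
      proof -
        have "(\<Sum>p\<in>Ed n E. \<mu> p * outer n y p) = (\<Sum>p\<in>Ed n E. \<mu> p * (y (fst p) * y (snd p)))"
          using Ed_sub by (intro sum.cong refl) (auto simp: outer_def)
        then show ?thesis using FO[OF outer_SP[OF ysq]] outer_sum[of n y] unfolding V_def by simp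
      qed
      have LL: "(\<Sum>i\<in>V. \<Sum>j\<in>V. y i * L i j * y j) = (\<Sum>p\<in>Ed n E. \<mu> p / a * (y (fst p) * y (snd p)))"
      proof -
        have "(\<Sum>i\<in>V. \<Sum>j\<in>V. y i * L i j * y j) = (\<Sum>p\<in>V \<times> V. y (fst p) * L (fst p) (snd p) * y (snd p))"
          by (simp add: sum.cartesian_product case_prod_beta)
        also have "\<dots> = (\<Sum>p\<in>V \<times> V. if p \<in> Ed n E then \<mu> p / a * (y (fst p) * y (snd p)) else 0)"
          unfolding L_def by (intro sum.cong refl) auto
        also have "\<dots> = (\<Sum>p\<in>(V \<times> V) \<inter> Ed n E. \<mu> p / a * (y (fst p) * y (snd p)))"
          by (rule sum.inter_restrict[symmetric]) (simp add: V_def)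
        also have "(V \<times> V) \<inter> Ed n E = Ed n E" using Ed_sub unfolding V_def by blast
        finally show ?thesis .
      qed
      have LL2: "(\<Sum>p\<in>Ed n E. \<mu> p / a * (y (fst p) * y (snd p)))
          = (\<Sum>p\<in>Ed n E. \<mu> p * (y (fst p) * y (snd p))) / a"
        by (simp add: sum_divide_distrib)
      have qy: "qf {1..n} (\<lambda>i j. (if i = j then t else 0) + L i j - 1) y
          = t + (\<Sum>p\<in>Ed n E. \<mu> p * (y (fst p) * y (snd p))) / a - (\<Sum>i\<in>V. y i)\<^sup>2"
        using qf_shift[of "{1..n}" t L y] ysq LL LL2 unfolding V_def by simp
      have "(\<Sum>i\<in>V. y i)\<^sup>2 - (\<Sum>p\<in>Ed n E. \<mu> p * (y (fst p) * y (snd p))) / a \<le> t"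
      proof -
        have "a * ((\<Sum>i\<in>V. y i)\<^sup>2 - (\<Sum>p\<in>Ed n E. \<mu> p * (y (fst p) * y (snd p))) / a) \<le> a * t"
          using FOy apos unfolding t_def by (simp add: right_diff_distrib)
        then show ?thesis using apos by (simp add: mult_le_cancel_left_pos)
      qed
      then have "0 \<le> qf {1..n} (\<lambda>i j. (if i = j then t else 0) + L i j - 1) y"
        using qy by linarith
      moreover have "qf {1..n} (\<lambda>i j. (if i = j then t else 0) + L i j - 1) x
          = N * qf {1..n} (\<lambda>i j. (if i = j then t else 0) + L i j - 1) y"
      proof -
        have "qf {1..n} (\<lambda>i j. (if i = j then t else 0) + L i j - 1) x
            = qf {1..n} (\<lambda>i j. (if i = j then t else 0) + L i j - 1) (\<lambda>i. sqrt N * y i)"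
          using xy by (intro qf_cong) simp
        also have "\<dots> = N * qf {1..n} (\<lambda>i j. (if i = j then t else 0) + L i j - 1) y"
          unfolding qf_scale using N0 by simp
        finally show ?thesis .
      qed
      ultimately show ?thesis using N0 by simp
    qed
  qed
  show ?thesis using tk Lprop psdM by blast
qed

lemma complement_D:
  assumes "{i, j} \<in> complement n E"
  shows "i \<noteq> j" "{i, j} \<notin> E"
proof -
  obtain a b where ab: "{i, j} = {a, b}" "a \<noteq> b" "{a, b} \<notin> E"
    using assms unfolding complement_def by blast
  then show "i \<noteq> j" by (auto simp: doubleton_eq_iff)
  show "{i, j} \<notin> E" using ab by simp
qed

lemma psd_to_rigid:
  assumes G: "graph_on n E" and t: "t > 1"
    and Lp: "\<forall>i j. 0 \<le> L i j \<and> L i j = L j i \<and> (L i j \<noteq> 0 \<longrightarrow> (i, j) \<in> Ed n E)"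
    and ps: "psd {1..n} (\<lambda>i j. (if i = j then t else 0) + L i j - 1)"
  shows "\<exists>u. rigid_vector_coloring n (complement n E) t u"
proof -
  define Y where "Y = (\<lambda>i j. ((if i = j then t else 0) + L i j - 1) / (t - 1))"
  have "psd {1..n} Y"
    unfolding psd_qf
  proof (intro conjI ballI allI)
    fix i j show "Y i j = Y j i" unfolding Y_def using Lp by auto
  next
    fix x
    have "qf {1..n} Y x = qf {1..n} (\<lambda>i j. (if i = j then t else 0) + L i j - 1) x / (t - 1)"
      unfolding qf_def Y_def by (simp add: sum_divide_distrib)
    moreover have "0 \<le> qf {1..n} (\<lambda>i j. (if i = j then t else 0) + L i j - 1) x"
      using ps unfolding psd_qf by blast
    ultimately show "0 \<le> qf {1..n} Y x" using t by simp
  qed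
  then obtain u where u: "\<forall>i\<in>{1..n}. \<forall>j\<in>{1..n}. ip (card {1..n}) (u i) (u j) = Y i j"
    using cholesky[of "{1..n}" Y] by auto
  have u': "ip n (u i) (u j) = Y i j" if "i \<in> {1..n}" "j \<in> {1..n}" for i j
    using u that by simp
  have Lii: "L i i = 0" for i using Lp Ed_diag[OF G] by blast
  have "rigid_vector_coloring n (complement n E) t u"
    unfolding rigid_vector_coloring_def
  proof (intro conjI ballI impI)
    fix i assume "i \<in> {1..n}"
    then show "ip n (u i) (u i) = 1" using u' t Lii by (simp add: Y_def)
  next
    fix i j assume ij: "i \<in> {1..n}" "j \<in> {1..n}" and c: "{i, j} \<in> complement n E"
    have "i \<noteq> j" "{i, j} \<notin> E" using complement_D[OF c] by auto
    then have "(i, j) \<notin> Ed n E" unfolding Ed_def by auto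
    then have "L i j = 0" using Lp by blast
    then show "ip n (u i) (u j) = - 1 / (t - 1)" using u'[OF ij] \<open>i \<noteq> j\<close> by (simp add: Y_def)
  next
    fix i j assume ij: "i \<in> {1..n}" "j \<in> {1..n}" and c: "i \<noteq> j \<and> {i, j} \<notin> complement n E"
    have "L i j \<ge> 0" using Lp by blast
    then have "(- 1) / (t - 1) \<le> (L i j - 1) / (t - 1)" using t
      by (intro divide_right_mono) auto
    then show "ip n (u i) (u j) \<ge> - 1 / (t - 1)" using u'[OF ij] c
      by (simp add: Y_def)
  qed
  then show ?thesis by blast
qed


lemma ip_diff_sq:
  "ip d (\<lambda>q. x q - y q) (\<lambda>q. x q - y q) = ip d x x - 2 * ip d x y + ip d y y"
proof -
  have "ip d (\<lambda>q. x q - y q) (\<lambda>q. x q - y q) = (\<Sum>k<d. x k * x k - 2 * (x k * y k) + y k * y k)"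
    unfolding ip_def by (intro sum.cong refl) (simp add: algebra_simps)
  also have "\<dots> = ip d x x - 2 * ip d x y + ip d y y"
    unfolding ip_def by (simp add: sum.distrib sum_subtractf sum_distrib_left)
  finally show ?thesis .
qed

lemma Inf_bound_mult:
  fixes K :: "real set"
  assumes "K \<noteq> {}" "\<forall>k\<in>K. X \<le> k * c" "c \<ge> 0" "\<forall>k\<in>K. k \<ge> 1"
  shows "X \<le> Inf K * c"
proof (cases "c = 0")
  case True
  then show ?thesis using assms(1,2) by auto
next
  case False
  then have cp: "c > 0" using assms(3) by simp
  have "X / c \<le> Inf K"
    using assms(1) by (rule cInf_greatest) (use assms(2) cp in \<open>simp add: pos_divide_le_eq\<close>)
  then show ?thesis using cp by (simp add: pos_divide_le_eq)
qed

theorem lemma2: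
  fixes n :: nat and E :: "nat set set"
  assumes "n \<ge> 1" and "graph_on n E"
  shows "theta2' n E \<in> theta2'_values n E \<and> theta2 n E = theta2' n E"
proof -
  note n = assms(1) and G = assms(2)
  define V where "V = {1..n}"
  define K where "K = {k. k > 1 \<and> (\<exists>u. rigid_vector_coloring n (complement n E) k u)}"
  define T where "T = theta2'_values n E"
  define ks where "ks = Inf K"
  have th2: "theta2 n E = ks" unfolding theta2_def theta2_bar_def ks_def K_def ..
  have K1: "\<forall>k\<in>K. k \<ge> 1" unfolding K_def by auto
  have Kne: "K \<noteq> {}"
  proof -
    have t: "real n + 1 > 1" using n by simp
    have Lp: "\<forall>i j. 0 \<le> (\<lambda>i j. 0::real) i j \<and> (\<lambda>i j. 0::real) i j = (\<lambda>i j. 0::real) j i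
        \<and> ((\<lambda>i j. 0::real) i j \<noteq> 0 \<longrightarrow> (i, j) \<in> Ed n E)" by simp
    have "psd {1..n} (\<lambda>i j. (if i = j then real n + 1 else 0) + (\<lambda>i j. 0::real) i j - 1)"
      unfolding psd_qf
    proof (intro conjI ballI allI)
      fix x :: "nat \<Rightarrow> real"
      have cs: "(\<Sum>i\<in>{1..n}. 1 * x i)\<^sup>2 \<le> (\<Sum>i\<in>{1..n}. 1\<^sup>2) * (\<Sum>i\<in>{1..n}. (x i)\<^sup>2)"
        by (rule Cauchy_Schwarz_ineq_sum)
      have "0 \<le> (\<Sum>i\<in>{1..n}. (x i)\<^sup>2)" by (intro sum_nonneg) simp
      then show "0 \<le> qf {1..n} (\<lambda>i j. (if i = j then real n + 1 else 0) + (\<lambda>i j. 0::real) i j - 1) x"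
        using qf_shift[of "{1..n}" "real n + 1" "\<lambda>i j. 0" x] cs by (simp add: algebra_simps)
    qed auto
    then have "real n + 1 \<in> K" using psd_to_rigid[OF G t Lp] t unfolding K_def by auto
    then show ?thesis by blast
  qed
  have bdd: "bdd_below K" using K1 by (auto intro: bdd_belowI)
  have ks1: "ks \<ge> 1" unfolding ks_def using Kne K1 by (intro cInf_greatest) auto
  have ks_le: "ks \<le> k" if "k \<in> K" for k unfolding ks_def by (rule cInf_lower[OF that bdd])
  have weakT: "s \<le> ks" if "s \<in> T" for s
    unfolding ks_def using Kne
  proof (rule cInf_greatest)
    fix k assume "k \<in> K"
    then show "s \<le> k" using weak[of s n E k] \<open>s \<in> T\<close> unfolding K_def T_def by auto
  qed
  obtain B where B: "B \<in> SP n" "\<forall>p\<in>Ed n E. B p \<le> 0" "ks \<le> (\<Sum>p\<in>{1..n} \<times> {1..n}. B p)"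
  proof (rule ccontr)
    assume noB: "\<not> thesis"
    then have noB': "\<not> (\<exists>B\<in>SP n. (\<forall>p\<in>Ed n E. B p \<le> 0) \<and> ks \<le> (\<Sum>p\<in>{1..n} \<times> {1..n}. B p))"
      using that by blast
    show False
    proof (cases "ks \<le> 1")
      case True
      define e1 where "e1 = (\<lambda>i::nat. if i = 1 then 1 else (0::real))"
      have "(\<Sum>i\<in>{1..n}. (e1 i)\<^sup>2) = (\<Sum>i\<in>{1..n}. e1 i)" by (intro sum.cong refl) (simp add: e1_def)
      also have "\<dots> = 1" using n by (simp add: e1_def)
      finally have C1: "outer n e1 \<in> SP n" by (rule outer_SP)
      have "(\<Sum>p\<in>{1..n} \<times> {1..n}. outer n e1 p) = 1"
        unfolding outer_sum using n by (simp add: e1_def)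
      moreover have "\<forall>p\<in>Ed n E. outer n e1 p \<le> 0"
      proof
        fix p assume p: "p \<in> Ed n E"
        obtain i j where pij: "p = (i, j)" by fastforce
        have "i \<noteq> j" using Ed_diag[OF G] p pij by blast
        then show "outer n e1 p \<le> 0" by (simp add: outer_def e1_def pij)
      qed
      ultimately show False using noB' C1 True by auto
    next
      case False
      then have ks1': "ks > 1" by simp
      obtain t L where tk: "t < ks"
        and Lp: "\<forall>i j. 0 \<le> L i j \<and> L i j = L j i \<and> (L i j \<noteq> 0 \<longrightarrow> (i, j) \<in> Ed n E)"
        and ps: "psd {1..n} (\<lambda>i j. (if i = j then t else 0) + L i j - 1)"
        using exists_B[OF n G noB'] by blast
      define t' where "t' = max t ((1 + ks) / 2)"
      have t'1: "t' > 1" "t' < ks" "t \<le> t'" using ks1' tk unfolding t'_def by (auto simp: less_max_iff_disj)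
      have "psd {1..n} (\<lambda>i j. (if i = j then t' else 0) + L i j - 1)"
        unfolding psd_qf
      proof (intro conjI ballI allI)
        fix i j show "(if i = j then t' else 0) + L i j - 1 = (if j = i then t' else 0) + L j i - 1"
          using Lp by auto
      next
        fix x :: "nat \<Rightarrow> real"
        have "0 \<le> qf {1..n} (\<lambda>i j. (if i = j then t else 0) + L i j - 1) x"
          using ps unfolding psd_qf by blast
        moreover have "0 \<le> (t' - t) * (\<Sum>i\<in>{1..n}. (x i)\<^sup>2)"
          using t'1 by (intro mult_nonneg_nonneg sum_nonneg) auto
        ultimately show "0 \<le> qf {1..n} (\<lambda>i j. (if i = j then t' else 0) + L i j - 1) x"
          using qf_shift[of "{1..n}" t L x] qf_shift[of "{1..n}" t' L x]
          by (simp add: algebra_simps)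
      qed
      then have "t' \<in> K" using psd_to_rigid[OF G t'1(1) Lp] t'1 unfolding K_def by auto
      then show False using ks_le t'1 by fastforce
    qed
  qed
  have psB: "psd {1..n} (curry B)" and trB: "(\<Sum>i\<in>{1..n}. B (i, i)) = 1"
    using B(1) unfolding SP_def by blast+
  obtain b where b0: "\<forall>i\<in>{1..n}. \<forall>j\<in>{1..n}. ip (card {1..n}) (b i) (b j) = curry B i j"
    using cholesky[OF _ psB] by auto
  have b: "ip n (b i) (b j) = B (i, j)" if "i \<in> V" "j \<in> V" for i j
    using b0 that unfolding V_def by simp
  define S where "S = vsum V b"
  have trb: "(\<Sum>i\<in>V. ip n (b i) (b i)) = 1" using trB b unfolding V_def by simp
  have hb: "\<forall>i\<in>{1..n}. \<forall>j\<in>{1..n}. {i, j} \<in> E \<longrightarrow> ip n (b i) (b j) \<le> 0"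
  proof (intro ballI impI)
    fix i j assume ij: "i \<in> {1..n}" "j \<in> {1..n}" "{i, j} \<in> E"
    then have "(i, j) \<in> Ed n E" unfolding Ed_def by auto
    then show "ip n (b i) (b j) \<le> 0" using B(2) b ij unfolding V_def by auto
  qed
  have SS: "ip n S S = (\<Sum>p\<in>{1..n} \<times> {1..n}. B p)"
  proof -
    have "ip n S S = (\<Sum>i\<in>V. \<Sum>j\<in>V. ip n (b i) (b j))"
      unfolding S_def by (simp only: ip_vsum_left ip_vsum_right) (rule sum.swap)
    also have "\<dots> = (\<Sum>i\<in>V. \<Sum>j\<in>V. B (i, j))" using b by simp
    also have "\<dots> = (\<Sum>p\<in>{1..n} \<times> {1..n}. B p)" unfolding V_def by (simp add: sum.cartesian_product)
    finally show ?thesis .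
  qed
  have keyb: "ip n (vsum I b) (vsum I b) \<le> k * (\<Sum>i\<in>I. ip n (b i) (b i))" if kK: "k \<in> K" and IV: "I \<subseteq> V" for k I
  proof -
    obtain u where "k > 1" "rigid_vector_coloring n (complement n E) k u" using kK unfolding K_def by blast
    then show ?thesis using key[of n E k u I n b] IV hb unfolding V_def by blast
  qed
  have SSk: "ip n S S = ks"
  proof -
    have "ip n S S \<le> ks * 1"
      using Inf_bound_mult[OF Kne _ _ K1, of "ip n S S" 1] keyb[of _ V] trb unfolding S_def ks_def by auto
    then show ?thesis using B(3) SS by simp
  qed
  have Sbpos: "ip n S (b i) \<ge> 0" if i: "i \<in> V" for i
  proof -
    define Si where "Si = vsum (V - {i}) b"
    have fin: "finite V" unfolding V_def by simp
    have Sdec: "Si = (\<lambda>q. S q - b i q)"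
    proof
      fix q
      have "(\<Sum>j\<in>V. b j q) = b i q + (\<Sum>j\<in>V - {i}. b j q)" by (rule sum.remove[OF fin i])
      then show "Si q = S q - b i q" unfolding Si_def S_def vsum_def by simp
    qed
    have tr': "(\<Sum>j\<in>V - {i}. ip n (b j) (b j)) = 1 - ip n (b i) (b i)"
      using trb sum.remove[OF fin i, of "\<lambda>j. ip n (b j) (b j)"] by simp
    have c0: "0 \<le> (\<Sum>j\<in>V - {i}. ip n (b j) (b j))" by (intro sum_nonneg ip_nonneg)
    have "ip n Si Si \<le> ks * (\<Sum>j\<in>V - {i}. ip n (b j) (b j))"
      using Inf_bound_mult[OF Kne _ c0 K1, of "ip n Si Si"] keyb[of _ "V - {i}"] unfolding Si_def ks_def by auto
    then have "ip n S S - 2 * ip n S (b i) + ip n (b i) (b i) \<le> ks * (1 - ip n (b i) (b i))"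
      unfolding Sdec ip_diff_sq tr' .
    then have "2 * ip n S (b i) \<ge> (1 + ks) * ip n (b i) (b i)" using SSk by (simp add: algebra_simps)
    moreover have "(1 + ks) * ip n (b i) (b i) \<ge> 0" using ks1 by (intro mult_nonneg_nonneg ip_nonneg) auto
    ultimately show ?thesis by simp
  qed
  define v where "v = (\<lambda>i. if i = 0 then S else b i)"
  define sv where "sv = (\<Sum>i=1..n. cfun n (v i) (v 0))"
  have svT: "sv \<in> T"
  proof -
    have "\<forall>i\<in>{1..n}. ip n (v 0) (v i) \<ge> 0" using Sbpos unfolding v_def V_def by auto
    moreover have "\<forall>i\<in>{1..n}. \<forall>j\<in>{1..n}. {i, j} \<in> E \<longrightarrow> ip n (v i) (v j) \<le> 0"
      using hb unfolding v_def by auto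
    ultimately show ?thesis unfolding T_def theta2'_values_def sv_def using n by blast
  qed
  have svge: "sv \<ge> ks"
  proof -
    have ci: "cfun n (b i) S \<ge> 2 * ip n S (b i) - ks * ip n (b i) (b i)" for i
    proof (cases "ip n (b i) (b i) = 0")
      case True
      then have "ip n S (b i) = 0" using ip_zero[of n "b i" S] by (simp add: ip_sym)
      then show ?thesis using True by (simp add: cfun_def)
    next
      case False
      define \<beta> where "\<beta> = ip n (b i) (b i)"
      define g where "g = ip n S (b i)"
      have bp: "\<beta> > 0" using False ip_nonneg[of n "b i"] unfolding \<beta>_def by linarith
      have cf: "cfun n (b i) S = g\<^sup>2 / (\<beta> * ks)"
        unfolding cfun_def using False SSk ks1 by (simp add: \<beta>_def g_def ip_sym[of n "b i" S])
      have "0 \<le> (g - ks * \<beta>)\<^sup>2" by simp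
      then have "(2 * g - ks * \<beta>) * (\<beta> * ks) \<le> g\<^sup>2"
        by (simp add: power2_eq_square algebra_simps)
      then have "2 * g - ks * \<beta> \<le> g\<^sup>2 / (\<beta> * ks)"
        using bp ks1 by (simp add: pos_le_divide_eq)
      then show ?thesis unfolding cf \<beta>_def g_def .
    qed
    have "sv = (\<Sum>i\<in>V. cfun n (b i) S)"
      unfolding sv_def v_def V_def by (intro sum.cong refl) auto
    also have "\<dots> \<ge> (\<Sum>i\<in>V. 2 * ip n S (b i) - ks * ip n (b i) (b i))"
      by (intro sum_mono ci)
    also have "(\<Sum>i\<in>V. 2 * ip n S (b i) - ks * ip n (b i) (b i))
        = 2 * ip n S S - ks * 1"
      unfolding S_def[symmetric] sum_subtractf sum_distrib_left[symmetric] trb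
      by (simp add: S_def ip_vsum_right)
    finally show ?thesis using SSk by simp
  qed
  have sveq: "sv = ks" using svge weakT[OF svT] by simp
  have supT: "Sup T = sv"
    by (rule cSup_eq_maximum[OF svT]) (use weakT sveq in auto)
  show ?thesis
    unfolding th2 theta2'_def T_def[symmetric] supT using svT sveq by simp
qed

end
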